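(* Let $F= \left( \begin{bmatrix} f \\ g \end{bmatrix}, \begin{bmatrix} \alpha & \beta \\ \beta^\dagger & \delta \end{bmatrix}, \begin{bmatrix} s \\ t \end{bmatrix} \right): A \to B \otimes C$ be a map in $\mathfrak{G}\left[ (\mathbb{X}, \dagger) \right]_X$, and let $m: B \to C$ be a conditional generator for $\begin{bmatrix} \alpha & \beta \\ \beta^\dagger & \delta \end{bmatrix}$. Then define the map $G_m: B \otimes A \to C$ in $\mathfrak{G}\left[ (\mathbb{X}, \dagger) \right]_X$ as the triple: \begin{align*} G_m = \left( \begin{bmatrix} m & g - m \circ f \end{bmatrix}, \delta - m \circ \beta, t - m\circ s \right) \end{align*} Then $G_m$ is a conditional of $F$.
   Context: Let $(\mathbb{X}, \dagger)$ be a dagger additive category (a dagger category enriched in abelian groups with additive dagger and finite biproducts satisfying $\pi_j^\dagger = \iota_j$; maps between biproducts are written as matrices and the dagger acts as conjugate transpose) and fix an object $X$. A map $p$ is $\dagger$-positive if $p = \phi^\dagger \circ \phi$ for some $\phi$. The Gauss construction $\mathfrak{G}\left[ (\mathbb{X}, \dagger) \right]_X$ is the Markov category with the objects of $\mathbb{X}$, maps $A \to B$ the triples $(f,p,x)$ with $f: A \to B$, $p: B \to B$ $\dagger$-positive, $x: X \to B$; identities $\mathsf{Id}_A = (\mathsf{id}_A,0,0)$; composition $(g,q,y) \circ (f,p,x) = (g \circ f, q + g \circ p \circ g^\dagger, y + g \circ x)$; $A \otimes B = A \oplus B$, $(f,p,x) \otimes (g,q,y) = \left(f \oplus g, p \oplus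 q, \begin{bmatrix} x \\ y \end{bmatrix}\right)$; copy $\mathsf{copy}_A = \left(\begin{bmatrix} \mathsf{id}_A \\ \mathsf{id}_A \end{bmatrix}, 0, 0\right)$, delete $\mathsf{del}_A = (0,0,0): A \to \mathsf{0}$. In $F$, $f: A \to B$, $g: A \to C$, $\alpha: B \to B$, $\beta: C \to B$, $\delta: C \to C$, $s: X \to B$, $t: X \to C$. A conditional generator for a $\dagger$-positive map $\begin{bmatrix} \alpha & \beta \\ \beta^\dagger & \delta \end{bmatrix}: B \oplus C \to B \oplus C$ is a map $m: B \to C$ such that (i) $m \circ \alpha = \beta^\dagger$ and (ii) $\delta - m \circ \beta$ is $\dagger$-positive. A map $G: B \otimes A \to C$ is a conditional of $F: A \to B \otimes C$ if $(\mathsf{Id}_B \otimes G) \circ (\mathsf{copy}_B \otimes \mathsf{Id}_A) \circ (\mathsf{Id}_B \otimes \mathsf{del}_C \otimes \mathsf{Id}_A) \circ (F \otimes \mathsf{Id}_A) \circ \mathsf{copy}_A = F$. *)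

theory Defs
  imports Main
begin

record ('o, 'm) dac =
  chom  :: "'o \<Rightarrow> 'o \<Rightarrow> 'm set"
  ccomp :: "'m \<Rightarrow> 'm \<Rightarrow> 'm"        (* ccomp g f = g \<circ> f *)
  cid   :: "'o \<Rightarrow> 'm"
  czero :: "'o \<Rightarrow> 'o \<Rightarrow> 'm"
  cadd  :: "'m \<Rightarrow> 'm \<Rightarrow> 'm"
  cneg  :: "'m \<Rightarrow> 'm"
  cdag  :: "'m \<Rightarrow> 'm"
  cbsum :: "'o \<Rightarrow> 'o \<Rightarrow> 'o"
  czobj :: "'o"
  cp1   :: "'o \<Rightarrow> 'o \<Rightarrow> 'm"
  cp2   :: "'o \<Rightarrow> 'o \<Rightarrow> 'm"
  ci1   :: "'o \<Rightarrow> 'o \<Rightarrow> 'm"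
  ci2   :: "'o \<Rightarrow> 'o \<Rightarrow> 'm"

definition dagger_additive_category :: "('o, 'm) dac \<Rightarrow> bool" where
  "dagger_additive_category K \<longleftrightarrow>
    \<comment> \<open>category\<close>
    (\<forall>A B C f g. f \<in> chom K A B \<longrightarrow> g \<in> chom K B C \<longrightarrow> ccomp K g f \<in> chom K A C) \<and>
    (\<forall>A B C D f g h. f \<in> chom K A B \<longrightarrow> g \<in> chom K B C \<longrightarrow> h \<in> chom K C D \<longrightarrow>
        ccomp K h (ccomp K g f) = ccomp K (ccomp K h g) f) \<and>
    (\<forall>A. cid K A \<in> chom K A A) \<and>
    (\<forall>A B f. f \<in> chom K A B \<longrightarrow> ccomp K (cid K B) f = f \<and> ccomp K f (cid K A) = f) \<and>
    \<comment> \<open>enrichment in abelian groups\<close>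
    (\<forall>A B. czero K A B \<in> chom K A B) \<and>
    (\<forall>A B f g. f \<in> chom K A B \<longrightarrow> g \<in> chom K A B \<longrightarrow> cadd K f g \<in> chom K A B) \<and>
    (\<forall>A B f. f \<in> chom K A B \<longrightarrow> cneg K f \<in> chom K A B) \<and>
    (\<forall>A B f g h. f \<in> chom K A B \<longrightarrow> g \<in> chom K A B \<longrightarrow> h \<in> chom K A B \<longrightarrow>
        cadd K (cadd K f g) h = cadd K f (cadd K g h)) \<and>
    (\<forall>A B f g. f \<in> chom K A B \<longrightarrow> g \<in> chom K A B \<longrightarrow> cadd K f g = cadd K g f) \<and>
    (\<forall>A B f. f \<in> chom K A B \<longrightarrow> cadd K (czero K A B) f = f) \<and>
    (\<forall>A B f. f \<in> chom K A B \<longrightarrow> cadd K (cneg K f) f = czero K A B) \<and>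
    (\<forall>A B C f g g'. f \<in> chom K A B \<longrightarrow> g \<in> chom K B C \<longrightarrow> g' \<in> chom K B C \<longrightarrow>
        ccomp K (cadd K g g') f = cadd K (ccomp K g f) (ccomp K g' f)) \<and>
    (\<forall>A B C f f' g. f \<in> chom K A B \<longrightarrow> f' \<in> chom K A B \<longrightarrow> g \<in> chom K B C \<longrightarrow>
        ccomp K g (cadd K f f') = cadd K (ccomp K g f) (ccomp K g f')) \<and>
    \<comment> \<open>additive dagger\<close>
    (\<forall>A B f. f \<in> chom K A B \<longrightarrow> cdag K f \<in> chom K B A) \<and>
    (\<forall>A B f. f \<in> chom K A B \<longrightarrow> cdag K (cdag K f) = f) \<and>
    (\<forall>A. cdag K (cid K A) = cid K A) \<and>
    (\<forall>A B C f g. f \<in> chom K A B \<longrightarrow> g \<in> chom K B C \<longrightarrow>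
        cdag K (ccomp K g f) = ccomp K (cdag K f) (cdag K g)) \<and>
    (\<forall>A B f g. f \<in> chom K A B \<longrightarrow> g \<in> chom K A B \<longrightarrow>
        cdag K (cadd K f g) = cadd K (cdag K f) (cdag K g)) \<and>
    \<comment> \<open>finite biproducts with \<pi>_j^\<dagger> = \<iota>_j\<close>
    (\<forall>A B. cp1 K A B \<in> chom K (cbsum K A B) A \<and> cp2 K A B \<in> chom K (cbsum K A B) B \<and>
           ci1 K A B \<in> chom K A (cbsum K A B) \<and> ci2 K A B \<in> chom K B (cbsum K A B)) \<and>
    (\<forall>A B. ccomp K (cp1 K A B) (ci1 K A B) = cid K A \<and>
           ccomp K (cp2 K A B) (ci2 K A B) = cid K B \<and>
           ccomp K (cp1 K A B) (ci2 K A B) = czero K B A \<and>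
           ccomp K (cp2 K A B) (ci1 K A B) = czero K A B \<and>
           cadd K (ccomp K (ci1 K A B) (cp1 K A B)) (ccomp K (ci2 K A B) (cp2 K A B))
             = cid K (cbsum K A B)) \<and>
    (\<forall>A B. cdag K (cp1 K A B) = ci1 K A B \<and> cdag K (cp2 K A B) = ci2 K A B) \<and>
    \<comment> \<open>zero object (empty biproduct)\<close>
    cid K (czobj K) = czero K (czobj K) (czobj K)"

definition csub :: "('o, 'm) dac \<Rightarrow> 'm \<Rightarrow> 'm \<Rightarrow> 'm" where
  "csub K f g = cadd K f (cneg K g)"

definition dag_positive :: "('o, 'm) dac \<Rightarrow> 'o \<Rightarrow> 'm \<Rightarrow> bool" where
  "dag_positive K B p \<longleftrightarrow> (\<exists>D \<phi>. \<phi> \<in> chom K B D \<and> p = ccomp K (cdag K \<phi>) \<phi>)"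

text \<open>Column [x; y] : Z \<rightarrow> B \<oplus> C\<close>
definition col :: "('o, 'm) dac \<Rightarrow> 'o \<Rightarrow> 'o \<Rightarrow> 'm \<Rightarrow> 'm \<Rightarrow> 'm" where
  "col K B C x y = cadd K (ccomp K (ci1 K B C) x) (ccomp K (ci2 K B C) y)"

text \<open>Row [a b] : B \<oplus> C \<rightarrow> Z\<close>
definition row :: "('o, 'm) dac \<Rightarrow> 'o \<Rightarrow> 'o \<Rightarrow> 'm \<Rightarrow> 'm \<Rightarrow> 'm" where
  "row K B C a b = cadd K (ccomp K a (cp1 K B C)) (ccomp K b (cp2 K B C))"

text \<open>2x2 matrix [[a, b],[c, d]] : B \<oplus> C \<rightarrow> B' \<oplus> C'\<close>
definition mat2 :: "('o, 'm) dac \<Rightarrow> 'o \<Rightarrow> 'o \<Rightarrow> 'o \<Rightarrow> 'o \<Rightarrow> 'm \<Rightarrow> 'm \<Rightarrow> 'm \<Rightarrow> 'm \<Rightarrow> 'm" where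
  "mat2 K B C B' C' a b c d =
     col K B' C' (row K B C a b) (row K B C c d)"

definition msum :: "('o, 'm) dac \<Rightarrow> 'o \<Rightarrow> 'o \<Rightarrow> 'o \<Rightarrow> 'o \<Rightarrow> 'm \<Rightarrow> 'm \<Rightarrow> 'm" where
  "msum K A A' B B' f g = mat2 K A A' B B' f (czero K A' B) (czero K A B') g"

type_synonym 'm gmap = "'m \<times> 'm \<times> 'm"

definition gauss_map :: "('o, 'm) dac \<Rightarrow> 'o \<Rightarrow> 'o \<Rightarrow> 'o \<Rightarrow> 'm gmap \<Rightarrow> bool" where
  "gauss_map K X A B F \<longleftrightarrow> (case F of (f, p, x) \<Rightarrow>
      f \<in> chom K A B \<and> p \<in> chom K B B \<and> dag_positive K B p \<and> x \<in> chom K X B)"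

definition gid :: "('o, 'm) dac \<Rightarrow> 'o \<Rightarrow> 'o \<Rightarrow> 'm gmap" where
  "gid K X A = (cid K A, czero K A A, czero K X A)"

definition gcomp :: "('o, 'm) dac \<Rightarrow> 'm gmap \<Rightarrow> 'm gmap \<Rightarrow> 'm gmap" where
  "gcomp K G F = (case G of (g, q, y) \<Rightarrow> case F of (f, p, x) \<Rightarrow>
      (ccomp K g f, cadd K q (ccomp K g (ccomp K p (cdag K g))), cadd K y (ccomp K g x)))"

definition gtensor :: "('o, 'm) dac \<Rightarrow> 'o \<Rightarrow> 'o \<Rightarrow> 'o \<Rightarrow> 'o \<Rightarrow> 'm gmap \<Rightarrow> 'm gmap \<Rightarrow> 'm gmap" where
  "gtensor K A1 B1 A2 B2 F1 F2 = (case F1 of (f, p, x) \<Rightarrow> case F2 of (g, q, y) \<Rightarrow>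
      (msum K A1 A2 B1 B2 f g, msum K B1 B2 B1 B2 p q, col K B1 B2 x y))"

definition gcopy :: "('o, 'm) dac \<Rightarrow> 'o \<Rightarrow> 'o \<Rightarrow> 'm gmap" where
  "gcopy K X A = (col K A A (cid K A) (cid K A),
                  czero K (cbsum K A A) (cbsum K A A), czero K X (cbsum K A A))"

definition gdel :: "('o, 'm) dac \<Rightarrow> 'o \<Rightarrow> 'o \<Rightarrow> 'm gmap" where
  "gdel K X A = (czero K A (czobj K), czero K (czobj K) (czobj K), czero K X (czobj K))"

definition glift :: "('o, 'm) dac \<Rightarrow> 'o \<Rightarrow> 'o \<Rightarrow> 'm \<Rightarrow> 'm gmap" where
  "glift K X B h = (h, czero K B B, czero K X B)"

definition runitor :: "('o, 'm) dac \<Rightarrow> 'o \<Rightarrow> 'm" where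
  "runitor K B = cp1 K B (czobj K)"

definition assoc :: "('o, 'm) dac \<Rightarrow> 'o \<Rightarrow> 'o \<Rightarrow> 'o \<Rightarrow> 'm" where
  "assoc K B C A =
     col K B (cbsum K C A)
       (ccomp K (cp1 K B C) (cp1 K (cbsum K B C) A))
       (col K C A (ccomp K (cp2 K B C) (cp1 K (cbsum K B C) A)) (cp2 K (cbsum K B C) A))"

definition conditional_generator ::
  "('o, 'm) dac \<Rightarrow> 'o \<Rightarrow> 'o \<Rightarrow> 'm \<Rightarrow> 'm \<Rightarrow> 'm \<Rightarrow> 'm \<Rightarrow> bool" where
  "conditional_generator K B C \<alpha> \<beta> \<delta> m \<longleftrightarrow>
     m \<in> chom K B C \<and> ccomp K m \<alpha> = cdag K \<beta> \<and> dag_positive K C (csub K \<delta> (ccomp K m \<beta>))"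

text \<open>G : B \<otimes> A \<rightarrow> C is a conditional of F : A \<rightarrow> B \<otimes> C:
  (Id_B \<otimes> G) \<circ> (copy_B \<otimes> Id_A) \<circ> (Id_B \<otimes> del_C \<otimes> Id_A) \<circ> (F \<otimes> Id_A) \<circ> copy_A = F,
  with the (non-strict) coherence isomorphisms of \<oplus> made explicit.\<close>
definition is_conditional ::
  "('o, 'm) dac \<Rightarrow> 'o \<Rightarrow> 'o \<Rightarrow> 'o \<Rightarrow> 'o \<Rightarrow> 'm gmap \<Rightarrow> 'm gmap \<Rightarrow> bool" where
  "is_conditional K X A B C F G \<longleftrightarrow>
     gauss_map K X (cbsum K B A) C G \<and>
     (let Z = czobj K;
          c1 = gcopy K X A;
          c2 = gtensor K A (cbsum K B C) A A F (gid K X A);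
          c3 = gtensor K (cbsum K B C) (cbsum K B Z) A A
                 (gtensor K B B C Z (gid K X B) (gdel K X C)) (gid K X A);
          c4 = gtensor K (cbsum K B Z) B A A (glift K X B (runitor K B)) (gid K X A);
          c5 = gtensor K B (cbsum K B B) A A (gcopy K X B) (gid K X A);
          c6 = glift K X (cbsum K B (cbsum K B A)) (assoc K B B A);
          c7 = gtensor K B B (cbsum K B A) C (gid K X B) G
      in gcomp K c7 (gcomp K c6 (gcomp K c5 (gcomp K c4 (gcomp K c3 (gcomp K c2 c1))))) = F)"

end

theory Submission
  imports Defs
begin


definition "tc K A B C g f = ccomp K g f"
definition "ta K A B f g = cadd K f g"
definition "tn K A B f = cneg K f"
definition "td K A B f = cdag K f"
definition "tcol K Z B C x y = col K B C x y"
definition "trow K B C Z a b = row K B C a b"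

definition "tgcomp K X A B C G F = (case G of (g,q,y) \<Rightarrow> case F of (f,p,x) \<Rightarrow>
   (tc K A B C g f, ta K C C q (tc K C B C g (tc K C B B p (td K B C g))), ta K X C y (tc K X B C g x)))"
definition "tmsum K A A' B B' f g = tcol K (cbsum K A A') B B' (trow K A A' B f (czero K A' B)) (trow K A A' B' (czero K A B') g)"
definition "tgtensor K X A1 B1 A2 B2 F1 F2 = (case F1 of (f,p,x) \<Rightarrow> case F2 of (g,q,y) \<Rightarrow>
   (tmsum K A1 A2 B1 B2 f g, tmsum K B1 B2 B1 B2 p q, tcol K X B1 B2 x y))"

locale DAC = fixes K :: "('o,'m) dac" assumes dac: "dagger_additive_category K"
begin
abbreviation "hom \<equiv> chom K"
abbreviation "cp \<equiv> ccomp K"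
abbreviation "ad \<equiv> cadd K"
abbreviation "zz \<equiv> czero K"

lemma comp_ty[intro]: "f \<in> hom A B \<Longrightarrow> g \<in> hom B C \<Longrightarrow> cp g f \<in> hom A C"
  using dac[unfolded dagger_additive_category_def, THEN conjunct1] by blast
lemma assoc: "f \<in> hom A B \<Longrightarrow> g \<in> hom B C \<Longrightarrow> h \<in> hom C D \<Longrightarrow> cp h (cp g f) = cp (cp h g) f"
  using dac[unfolded dagger_additive_category_def, THEN conjunct2, THEN conjunct1] by blast
lemma id_ty[intro]: "cid K A \<in> hom A A"
  using dac[unfolded dagger_additive_category_def, THEN conjunct2, THEN conjunct2, THEN conjunct1] by blast
lemma idl: "f \<in> hom A B \<Longrightarrow> cp (cid K B) f = f"
  using dac[unfolded dagger_additive_category_def, THEN conjunct2, THEN conjunct2, THEN conjunct2, THEN conjunct1] by blast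
lemma idr: "f \<in> hom A B \<Longrightarrow> cp f (cid K A) = f"
  using dac[unfolded dagger_additive_category_def, THEN conjunct2, THEN conjunct2, THEN conjunct2, THEN conjunct1] by blast
lemma zero_ty[intro]: "zz A B \<in> hom A B"
  using dac[unfolded dagger_additive_category_def, THEN conjunct2, THEN conjunct2, THEN conjunct2, THEN conjunct2, THEN conjunct1] by blast
lemma add_ty[intro]: "f \<in> hom A B \<Longrightarrow> g \<in> hom A B \<Longrightarrow> ad f g \<in> hom A B"
  using dac[unfolded dagger_additive_category_def, THEN conjunct2, THEN conjunct2, THEN conjunct2, THEN conjunct2, THEN conjunct2, THEN conjunct1] by blast
lemma neg_ty[intro]: "f \<in> hom A B \<Longrightarrow> cneg K f \<in> hom A B"
  using dac[unfolded dagger_additive_category_def, THEN conjunct2, THEN conjunct2, THEN conjunct2, THEN conjunct2, THEN conjunct2, THEN conjunct2, THEN conjunct1] by blast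
lemma add_assoc: "f \<in> hom A B \<Longrightarrow> g \<in> hom A B \<Longrightarrow> h \<in> hom A B \<Longrightarrow> ad (ad f g) h = ad f (ad g h)"
  using dac[unfolded dagger_additive_category_def, THEN conjunct2, THEN conjunct2, THEN conjunct2, THEN conjunct2, THEN conjunct2, THEN conjunct2, THEN conjunct2, THEN conjunct1] by blast
lemma add_comm: "f \<in> hom A B \<Longrightarrow> g \<in> hom A B \<Longrightarrow> ad f g = ad g f"
  using dac[unfolded dagger_additive_category_def, THEN conjunct2, THEN conjunct2, THEN conjunct2, THEN conjunct2, THEN conjunct2, THEN conjunct2, THEN conjunct2, THEN conjunct2, THEN conjunct1] by blast
lemma add_zl: "f \<in> hom A B \<Longrightarrow> ad (zz A B) f = f"
  using dac[unfolded dagger_additive_category_def, THEN conjunct2, THEN conjunct2, THEN conjunct2, THEN conjunct2, THEN conjunct2, THEN conjunct2, THEN conjunct2, THEN conjunct2, THEN conjunct2, THEN conjunct1] by blast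
lemma add_negl: "f \<in> hom A B \<Longrightarrow> ad (cneg K f) f = zz A B"
  using dac[unfolded dagger_additive_category_def, THEN conjunct2, THEN conjunct2, THEN conjunct2, THEN conjunct2, THEN conjunct2, THEN conjunct2, THEN conjunct2, THEN conjunct2, THEN conjunct2, THEN conjunct2, THEN conjunct1] by blast
lemma distr: "f \<in> hom A B \<Longrightarrow> g \<in> hom B C \<Longrightarrow> g' \<in> hom B C \<Longrightarrow> cp (ad g g') f = ad (cp g f) (cp g' f)"
  using dac[unfolded dagger_additive_category_def, THEN conjunct2, THEN conjunct2, THEN conjunct2, THEN conjunct2, THEN conjunct2, THEN conjunct2, THEN conjunct2, THEN conjunct2, THEN conjunct2, THEN conjunct2, THEN conjunct2, THEN conjunct1] by blast
lemma distl: "f \<in> hom A B \<Longrightarrow> f' \<in> hom A B \<Longrightarrow> g \<in> hom B C \<Longrightarrow> cp g (ad f f') = ad (cp g f) (cp g f')"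
  using dac[unfolded dagger_additive_category_def, THEN conjunct2, THEN conjunct2, THEN conjunct2, THEN conjunct2, THEN conjunct2, THEN conjunct2, THEN conjunct2, THEN conjunct2, THEN conjunct2, THEN conjunct2, THEN conjunct2, THEN conjunct2, THEN conjunct1] by blast
lemma dag_ty[intro]: "f \<in> hom A B \<Longrightarrow> cdag K f \<in> hom B A"
  using dac[unfolded dagger_additive_category_def, THEN conjunct2, THEN conjunct2, THEN conjunct2, THEN conjunct2, THEN conjunct2, THEN conjunct2, THEN conjunct2, THEN conjunct2, THEN conjunct2, THEN conjunct2, THEN conjunct2, THEN conjunct2, THEN conjunct2, THEN conjunct1] by blast
lemma dagdag: "f \<in> hom A B \<Longrightarrow> cdag K (cdag K f) = f"
  using dac[unfolded dagger_additive_category_def, THEN conjunct2, THEN conjunct2, THEN conjunct2, THEN conjunct2, THEN conjunct2, THEN conjunct2, THEN conjunct2, THEN conjunct2, THEN conjunct2, THEN conjunct2, THEN conjunct2, THEN conjunct2, THEN conjunct2, THEN conjunct2, THEN conjunct1] by blast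
lemma dagid: "cdag K (cid K A) = cid K A"
  using dac[unfolded dagger_additive_category_def, THEN conjunct2, THEN conjunct2, THEN conjunct2, THEN conjunct2, THEN conjunct2, THEN conjunct2, THEN conjunct2, THEN conjunct2, THEN conjunct2, THEN conjunct2, THEN conjunct2, THEN conjunct2, THEN conjunct2, THEN conjunct2, THEN conjunct2, THEN conjunct1] by blast
lemma dagcomp: "f \<in> hom A B \<Longrightarrow> g \<in> hom B C \<Longrightarrow> cdag K (cp g f) = cp (cdag K f) (cdag K g)"
  using dac[unfolded dagger_additive_category_def, THEN conjunct2, THEN conjunct2, THEN conjunct2, THEN conjunct2, THEN conjunct2, THEN conjunct2, THEN conjunct2, THEN conjunct2, THEN conjunct2, THEN conjunct2, THEN conjunct2, THEN conjunct2, THEN conjunct2, THEN conjunct2, THEN conjunct2, THEN conjunct2, THEN conjunct1] by blast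
lemma dagadd: "f \<in> hom A B \<Longrightarrow> g \<in> hom A B \<Longrightarrow> cdag K (ad f g) = ad (cdag K f) (cdag K g)"
  using dac[unfolded dagger_additive_category_def, THEN conjunct2, THEN conjunct2, THEN conjunct2, THEN conjunct2, THEN conjunct2, THEN conjunct2, THEN conjunct2, THEN conjunct2, THEN conjunct2, THEN conjunct2, THEN conjunct2, THEN conjunct2, THEN conjunct2, THEN conjunct2, THEN conjunct2, THEN conjunct2, THEN conjunct2, THEN conjunct1] by blast
lemma p1_ty[intro]: "cp1 K A B \<in> hom (cbsum K A B) A"
  using dac[unfolded dagger_additive_category_def, THEN conjunct2, THEN conjunct2, THEN conjunct2, THEN conjunct2, THEN conjunct2, THEN conjunct2, THEN conjunct2, THEN conjunct2, THEN conjunct2, THEN conjunct2, THEN conjunct2, THEN conjunct2, THEN conjunct2, THEN conjunct2, THEN conjunct2, THEN conjunct2, THEN conjunct2, THEN conjunct2, THEN conjunct1] by blast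
lemma p2_ty[intro]: "cp2 K A B \<in> hom (cbsum K A B) B"
  using dac[unfolded dagger_additive_category_def, THEN conjunct2, THEN conjunct2, THEN conjunct2, THEN conjunct2, THEN conjunct2, THEN conjunct2, THEN conjunct2, THEN conjunct2, THEN conjunct2, THEN conjunct2, THEN conjunct2, THEN conjunct2, THEN conjunct2, THEN conjunct2, THEN conjunct2, THEN conjunct2, THEN conjunct2, THEN conjunct2, THEN conjunct1] by blast
lemma i1_ty[intro]: "ci1 K A B \<in> hom A (cbsum K A B)"
  using dac[unfolded dagger_additive_category_def, THEN conjunct2, THEN conjunct2, THEN conjunct2, THEN conjunct2, THEN conjunct2, THEN conjunct2, THEN conjunct2, THEN conjunct2, THEN conjunct2, THEN conjunct2, THEN conjunct2, THEN conjunct2, THEN conjunct2, THEN conjunct2, THEN conjunct2, THEN conjunct2, THEN conjunct2, THEN conjunct2, THEN conjunct1] by blast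
lemma i2_ty[intro]: "ci2 K A B \<in> hom B (cbsum K A B)"
  using dac[unfolded dagger_additive_category_def, THEN conjunct2, THEN conjunct2, THEN conjunct2, THEN conjunct2, THEN conjunct2, THEN conjunct2, THEN conjunct2, THEN conjunct2, THEN conjunct2, THEN conjunct2, THEN conjunct2, THEN conjunct2, THEN conjunct2, THEN conjunct2, THEN conjunct2, THEN conjunct2, THEN conjunct2, THEN conjunct2, THEN conjunct1] by blast
lemma p1i1: "cp (cp1 K A B) (ci1 K A B) = cid K A"
  using dac[unfolded dagger_additive_category_def, THEN conjunct2, THEN conjunct2, THEN conjunct2, THEN conjunct2, THEN conjunct2, THEN conjunct2, THEN conjunct2, THEN conjunct2, THEN conjunct2, THEN conjunct2, THEN conjunct2, THEN conjunct2, THEN conjunct2, THEN conjunct2, THEN conjunct2, THEN conjunct2, THEN conjunct2, THEN conjunct2, THEN conjunct2, THEN conjunct1] by blast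
lemma p2i2: "cp (cp2 K A B) (ci2 K A B) = cid K B"
  using dac[unfolded dagger_additive_category_def, THEN conjunct2, THEN conjunct2, THEN conjunct2, THEN conjunct2, THEN conjunct2, THEN conjunct2, THEN conjunct2, THEN conjunct2, THEN conjunct2, THEN conjunct2, THEN conjunct2, THEN conjunct2, THEN conjunct2, THEN conjunct2, THEN conjunct2, THEN conjunct2, THEN conjunct2, THEN conjunct2, THEN conjunct2, THEN conjunct1] by blast
lemma p1i2: "cp (cp1 K A B) (ci2 K A B) = zz B A"
  using dac[unfolded dagger_additive_category_def, THEN conjunct2, THEN conjunct2, THEN conjunct2, THEN conjunct2, THEN conjunct2, THEN conjunct2, THEN conjunct2, THEN conjunct2, THEN conjunct2, THEN conjunct2, THEN conjunct2, THEN conjunct2, THEN conjunct2, THEN conjunct2, THEN conjunct2, THEN conjunct2, THEN conjunct2, THEN conjunct2, THEN conjunct2, THEN conjunct1] by blast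
lemma p2i1: "cp (cp2 K A B) (ci1 K A B) = zz A B"
  using dac[unfolded dagger_additive_category_def, THEN conjunct2, THEN conjunct2, THEN conjunct2, THEN conjunct2, THEN conjunct2, THEN conjunct2, THEN conjunct2, THEN conjunct2, THEN conjunct2, THEN conjunct2, THEN conjunct2, THEN conjunct2, THEN conjunct2, THEN conjunct2, THEN conjunct2, THEN conjunct2, THEN conjunct2, THEN conjunct2, THEN conjunct2, THEN conjunct1] by blast
lemma bisum: "ad (cp (ci1 K A B) (cp1 K A B)) (cp (ci2 K A B) (cp2 K A B)) = cid K (cbsum K A B)"
  using dac[unfolded dagger_additive_category_def, THEN conjunct2, THEN conjunct2, THEN conjunct2, THEN conjunct2, THEN conjunct2, THEN conjunct2, THEN conjunct2, THEN conjunct2, THEN conjunct2, THEN conjunct2, THEN conjunct2, THEN conjunct2, THEN conjunct2, THEN conjunct2, THEN conjunct2, THEN conjunct2, THEN conjunct2, THEN conjunct2, THEN conjunct2, THEN conjunct1] by blast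
lemma dagp1: "cdag K (cp1 K A B) = ci1 K A B"
  using dac[unfolded dagger_additive_category_def, THEN conjunct2, THEN conjunct2, THEN conjunct2, THEN conjunct2, THEN conjunct2, THEN conjunct2, THEN conjunct2, THEN conjunct2, THEN conjunct2, THEN conjunct2, THEN conjunct2, THEN conjunct2, THEN conjunct2, THEN conjunct2, THEN conjunct2, THEN conjunct2, THEN conjunct2, THEN conjunct2, THEN conjunct2, THEN conjunct2, THEN conjunct1] by blast
lemma dagp2: "cdag K (cp2 K A B) = ci2 K A B"
  using dac[unfolded dagger_additive_category_def, THEN conjunct2, THEN conjunct2, THEN conjunct2, THEN conjunct2, THEN conjunct2, THEN conjunct2, THEN conjunct2, THEN conjunct2, THEN conjunct2, THEN conjunct2, THEN conjunct2, THEN conjunct2, THEN conjunct2, THEN conjunct2, THEN conjunct2, THEN conjunct2, THEN conjunct2, THEN conjunct2, THEN conjunct2, THEN conjunct2, THEN conjunct1] by blast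
lemma zobj: "cid K (czobj K) = zz (czobj K) (czobj K)"
  using dac[unfolded dagger_additive_category_def, THEN conjunct2, THEN conjunct2, THEN conjunct2, THEN conjunct2, THEN conjunct2, THEN conjunct2, THEN conjunct2, THEN conjunct2, THEN conjunct2, THEN conjunct2, THEN conjunct2, THEN conjunct2, THEN conjunct2, THEN conjunct2, THEN conjunct2, THEN conjunct2, THEN conjunct2, THEN conjunct2, THEN conjunct2, THEN conjunct2, THEN conjunct2] by blast


lemmas tys = comp_ty id_ty zero_ty add_ty neg_ty dag_ty p1_ty p2_ty i1_ty i2_ty


lemma idem_zero: "x \<in> hom A B \<Longrightarrow> ad x x = x \<Longrightarrow> x = zz A B"
proof -
  assume x: "x \<in> hom A B" and e: "ad x x = x"
  have nx: "cneg K x \<in> hom A B" using x by (rule neg_ty)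
  have "zz A B = ad (cneg K x) (ad x x)" using e add_negl[OF x] by simp
  also have "\<dots> = ad (ad (cneg K x) x) x" using add_assoc[OF nx x x] by simp
  also have "\<dots> = x" using x by (simp add: add_negl add_zl)
  finally show ?thesis by simp
qed

lemma inv_unique: "a \<in> hom A B \<Longrightarrow> b \<in> hom A B \<Longrightarrow> ad a b = zz A B \<Longrightarrow> b = cneg K a"
proof -
  assume a: "a \<in> hom A B" and b: "b \<in> hom A B" and e: "ad a b = zz A B"
  have na: "cneg K a \<in> hom A B" using a by (rule neg_ty)
  have "b = ad (ad (cneg K a) a) b" using a b by (simp add: add_negl add_zl)
  also have "\<dots> = ad (cneg K a) (ad a b)" using add_assoc[OF na a b] by simp
  also have "\<dots> = ad (cneg K a) (zz A B)" using e by simp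
  also have "\<dots> = cneg K a" using add_comm[OF na zero_ty] add_zl[OF na] by simp
  finally show ?thesis .
qed

lemma add_zr: "f \<in> hom A B \<Longrightarrow> ad f (zz A B) = f"
  using add_comm[OF _ zero_ty] add_zl by metis
lemma add_negr: "f \<in> hom A B \<Longrightarrow> ad f (cneg K f) = zz A B"
  using add_comm[OF _ neg_ty] add_negl by metis

lemma comp_zr: "h \<in> hom B C \<Longrightarrow> cp h (zz A B) = zz A C"
  apply (rule idem_zero)
   apply (blast intro: tys)
  using distl[OF zero_ty zero_ty] add_zl[OF zero_ty] by metis
lemma comp_zl: "h \<in> hom A B \<Longrightarrow> cp (zz B C) h = zz A C"
  apply (rule idem_zero)
   apply (blast intro: tys)
  using distr[OF _ zero_ty zero_ty] add_zl[OF zero_ty] by metis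
lemma dag_zero: "cdag K (zz A B) = zz B A"
  apply (rule idem_zero)
   apply (blast intro: tys)
  using dagadd[OF zero_ty zero_ty] add_zl[OF zero_ty] by metis
lemma neg_comp: "f \<in> hom A B \<Longrightarrow> g \<in> hom B C \<Longrightarrow> cp (cneg K g) f = cneg K (cp g f)"
  apply (rule inv_unique)
    apply (blast intro: tys)+
  using distr[OF _ _ neg_ty] add_negr comp_zl by metis
lemma comp_neg: "f \<in> hom A B \<Longrightarrow> g \<in> hom B C \<Longrightarrow> cp g (cneg K f) = cneg K (cp g f)"
  apply (rule inv_unique)
    apply (blast intro: tys)+
  using distl[OF _ neg_ty] add_negr comp_zr by metis
lemma dag_neg: "f \<in> hom A B \<Longrightarrow> cdag K (cneg K f) = cneg K (cdag K f)"
  apply (rule inv_unique)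
    apply (blast intro: tys)+
  using dagadd[OF _ neg_ty] add_negr dag_zero by metis
lemma negneg: "f \<in> hom A B \<Longrightarrow> cneg K (cneg K f) = f"
  using inv_unique[OF neg_ty] add_negl by metis
lemma neg_add: "f \<in> hom A B \<Longrightarrow> g \<in> hom A B \<Longrightarrow> cneg K (ad f g) = ad (cneg K f) (cneg K g)"
proof -
  assume f: "f \<in> hom A B" and g: "g \<in> hom A B"
  have nf: "cneg K f \<in> hom A B" and ng: "cneg K g \<in> hom A B" using f g by (blast intro: tys)+
  have "ad (ad f g) (ad (cneg K f) (cneg K g)) = ad f (ad g (ad (cneg K f) (cneg K g)))"
    using add_assoc[OF f g add_ty[OF nf ng]] by simp
  also have "ad g (ad (cneg K f) (cneg K g)) = ad (cneg K f) (ad g (cneg K g))"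
    using add_assoc[OF g nf ng] add_assoc[OF nf g ng] add_comm[OF g nf] by simp
  also have "ad g (cneg K g) = zz A B" using add_negr[OF g] .
  also have "ad (cneg K f) (zz A B) = cneg K f" using add_zr[OF nf] .
  also have "ad f (cneg K f) = zz A B" using add_negr[OF f] .
  finally show ?thesis using inv_unique[OF add_ty[OF f g] add_ty[OF nf ng]] by simp
qed
lemma neg_zero: "cneg K (zz A B) = zz A B"
  using inv_unique[OF zero_ty zero_ty add_zl[OF zero_ty]] by simp
lemma dagi1: "cdag K (ci1 K A B) = cp1 K A B" by (metis dagdag dagp1 p1_ty)
lemma dagi2: "cdag K (ci2 K A B) = cp2 K A B" by (metis dagdag dagp2 p2_ty)

lemmas tdefs = tc_def ta_def tn_def td_def tcol_def trow_def

lemma tc_ty: "f \<in> hom A B \<Longrightarrow> g \<in> hom B C \<Longrightarrow> tc K A B C g f \<in> hom A C"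
  unfolding tdefs by (rule comp_ty)
lemma ta_ty: "f \<in> hom A B \<Longrightarrow> g \<in> hom A B \<Longrightarrow> ta K A B f g \<in> hom A B"
  unfolding tdefs by (rule add_ty)
lemma tn_ty: "f \<in> hom A B \<Longrightarrow> tn K A B f \<in> hom A B"
  unfolding tdefs by (rule neg_ty)
lemma td_ty: "f \<in> hom A B \<Longrightarrow> td K A B f \<in> hom B A"
  unfolding tdefs by (rule dag_ty)
lemma tcol_ty: "x \<in> hom Z B \<Longrightarrow> y \<in> hom Z C \<Longrightarrow> tcol K Z B C x y \<in> hom Z (cbsum K B C)"
  unfolding tdefs col_def by (blast intro: tys)
lemma trow_ty: "a \<in> hom B Z \<Longrightarrow> b \<in> hom C Z \<Longrightarrow> trow K B C Z a b \<in> hom (cbsum K B C) Z"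
  unfolding tdefs row_def by (blast intro: tys)

lemmas TY = tc_ty ta_ty tn_ty td_ty tcol_ty trow_ty id_ty zero_ty p1_ty p2_ty i1_ty i2_ty

lemma t_assoc: "f \<in> hom A B \<Longrightarrow> g \<in> hom B C \<Longrightarrow> h \<in> hom C D \<Longrightarrow>
  tc K A B D (tc K B C D h g) f = tc K A C D h (tc K A B C g f)"
  unfolding tdefs by (simp add: assoc)
lemma t_idl: "f \<in> hom A B \<Longrightarrow> tc K A B B (cid K B) f = f" unfolding tdefs by (rule idl)
lemma t_idr: "f \<in> hom A B \<Longrightarrow> tc K A A B f (cid K A) = f" unfolding tdefs by (rule idr)
lemma t_zl: "f \<in> hom A B \<Longrightarrow> tc K A B C (zz B C) f = zz A C" unfolding tdefs by (rule comp_zl)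
lemma t_zr: "g \<in> hom B C \<Longrightarrow> tc K A B C g (zz A B) = zz A C" unfolding tdefs by (rule comp_zr)
lemma t_addzl: "f \<in> hom A B \<Longrightarrow> ta K A B (zz A B) f = f" unfolding tdefs by (rule add_zl)
lemma t_addzr: "f \<in> hom A B \<Longrightarrow> ta K A B f (zz A B) = f" unfolding tdefs by (rule add_zr)
lemma t_add_assoc: "f \<in> hom A B \<Longrightarrow> g \<in> hom A B \<Longrightarrow> h \<in> hom A B \<Longrightarrow>
  ta K A B (ta K A B f g) h = ta K A B f (ta K A B g h)" unfolding tdefs by (rule add_assoc)
lemma t_add_comm: "f \<in> hom A B \<Longrightarrow> g \<in> hom A B \<Longrightarrow> ta K A B f g = ta K A B g f"
  unfolding tdefs by (rule add_comm)
lemma t_add_lcomm: "f \<in> hom A B \<Longrightarrow> g \<in> hom A B \<Longrightarrow> h \<in> hom A B \<Longrightarrow>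
  ta K A B f (ta K A B g h) = ta K A B g (ta K A B f h)"
  unfolding tdefs using add_assoc[of f A B g h] add_assoc[of g A B f h] add_comm[of f A B g] by simp
lemma t_distr: "f \<in> hom A B \<Longrightarrow> g \<in> hom B C \<Longrightarrow> g' \<in> hom B C \<Longrightarrow>
  tc K A B C (ta K B C g g') f = ta K A C (tc K A B C g f) (tc K A B C g' f)" unfolding tdefs by (rule distr)
lemma t_distl: "f \<in> hom A B \<Longrightarrow> f' \<in> hom A B \<Longrightarrow> g \<in> hom B C \<Longrightarrow>
  tc K A B C g (ta K A B f f') = ta K A C (tc K A B C g f) (tc K A B C g f')" unfolding tdefs by (rule distl)
lemma t_negcomp: "f \<in> hom A B \<Longrightarrow> g \<in> hom B C \<Longrightarrow> tc K A B C (tn K B C g) f = tn K A C (tc K A B C g f)"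
  unfolding tdefs by (rule neg_comp)
lemma t_compneg: "f \<in> hom A B \<Longrightarrow> g \<in> hom B C \<Longrightarrow> tc K A B C g (tn K A B f) = tn K A C (tc K A B C g f)"
  unfolding tdefs by (rule comp_neg)
lemma t_negneg: "f \<in> hom A B \<Longrightarrow> tn K A B (tn K A B f) = f" unfolding tdefs by (rule negneg)
lemma t_negzero: "tn K A B (zz A B) = zz A B" unfolding tdefs by (rule neg_zero)
lemma t_negadd: "f \<in> hom A B \<Longrightarrow> g \<in> hom A B \<Longrightarrow> tn K A B (ta K A B f g) = ta K A B (tn K A B f) (tn K A B g)"
  unfolding tdefs by (rule neg_add)
lemma t_dagdag: "f \<in> hom A B \<Longrightarrow> td K B A (td K A B f) = f" unfolding tdefs by (rule dagdag)
lemma t_dagid: "td K A A (cid K A) = cid K A" unfolding tdefs by (rule dagid)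
lemma t_dagzero: "td K A B (zz A B) = zz B A" unfolding tdefs by (rule dag_zero)
lemma t_dagcomp: "f \<in> hom A B \<Longrightarrow> g \<in> hom B C \<Longrightarrow>
  td K A C (tc K A B C g f) = tc K C B A (td K A B f) (td K B C g)" unfolding tdefs by (rule dagcomp)
lemma t_dagadd: "f \<in> hom A B \<Longrightarrow> g \<in> hom A B \<Longrightarrow>
  td K A B (ta K A B f g) = ta K B A (td K A B f) (td K A B g)" unfolding tdefs by (rule dagadd)
lemma t_dagneg: "f \<in> hom A B \<Longrightarrow> td K A B (tn K A B f) = tn K B A (td K A B f)"
  unfolding tdefs by (rule dag_neg)
lemma t_dagp1: "td K (cbsum K A B) A (cp1 K A B) = ci1 K A B" unfolding tdefs by (rule dagp1)
lemma t_dagp2: "td K (cbsum K A B) B (cp2 K A B) = ci2 K A B" unfolding tdefs by (rule dagp2)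
lemma t_dagi1: "td K A (cbsum K A B) (ci1 K A B) = cp1 K A B" unfolding tdefs by (rule dagi1)
lemma t_dagi2: "td K B (cbsum K A B) (ci2 K A B) = cp2 K A B" unfolding tdefs by (rule dagi2)
lemma t_p1i1: "tc K A (cbsum K A B) A (cp1 K A B) (ci1 K A B) = cid K A" unfolding tdefs by (rule p1i1)
lemma t_p2i2: "tc K B (cbsum K A B) B (cp2 K A B) (ci2 K A B) = cid K B" unfolding tdefs by (rule p2i2)
lemma t_p1i2: "tc K B (cbsum K A B) A (cp1 K A B) (ci2 K A B) = zz B A" unfolding tdefs by (rule p1i2)
lemma t_p2i1: "tc K A (cbsum K A B) B (cp2 K A B) (ci1 K A B) = zz A B" unfolding tdefs by (rule p2i1)

lemmas BAS = TY t_assoc t_idl t_idr t_zl t_zr t_addzl t_addzr t_distr t_distl t_negcomp t_compneg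
  t_negneg t_negzero t_negadd t_dagdag t_dagid t_dagzero t_dagcomp t_dagadd t_dagneg
  t_dagp1 t_dagp2 t_dagi1 t_dagi2 t_p1i1 t_p2i2 t_p1i2 t_p2i1

lemma tcol_eq: "tcol K Z B C x y = ta K Z (cbsum K B C) (tc K Z B (cbsum K B C) (ci1 K B C) x) (tc K Z C (cbsum K B C) (ci2 K B C) y)"
  unfolding tdefs col_def ..
lemma trow_eq: "trow K B C Z a b = ta K (cbsum K B C) Z (tc K (cbsum K B C) B Z a (cp1 K B C)) (tc K (cbsum K B C) C Z b (cp2 K B C))"
  unfolding tdefs row_def ..


lemma t_p1i1': "x \<in> hom Z A \<Longrightarrow> tc K Z (cbsum K A B) A (cp1 K A B) (tc K Z A (cbsum K A B) (ci1 K A B) x) = x"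
  by (simp add: t_assoc[symmetric] TY t_p1i1 t_idl)
lemma t_p2i2': "x \<in> hom Z B \<Longrightarrow> tc K Z (cbsum K A B) B (cp2 K A B) (tc K Z B (cbsum K A B) (ci2 K A B) x) = x"
  by (simp add: t_assoc[symmetric] TY t_p2i2 t_idl)
lemma t_p1i2': "x \<in> hom Z B \<Longrightarrow> tc K Z (cbsum K A B) A (cp1 K A B) (tc K Z B (cbsum K A B) (ci2 K A B) x) = zz Z A"
  by (simp add: t_assoc[symmetric] TY t_p1i2 t_zl)
lemma t_p2i1': "x \<in> hom Z A \<Longrightarrow> tc K Z (cbsum K A B) B (cp2 K A B) (tc K Z A (cbsum K A B) (ci1 K A B) x) = zz Z B"
  by (simp add: t_assoc[symmetric] TY t_p2i1 t_zl)

lemmas BAS2 = BAS t_p1i1' t_p2i2' t_p1i2' t_p2i1'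

lemma t_p1col: "x \<in> hom Z B \<Longrightarrow> y \<in> hom Z C \<Longrightarrow> tc K Z (cbsum K B C) B (cp1 K B C) (tcol K Z B C x y) = x"
  unfolding tcol_eq by (simp add: BAS2)
lemma t_p2col: "x \<in> hom Z B \<Longrightarrow> y \<in> hom Z C \<Longrightarrow> tc K Z (cbsum K B C) C (cp2 K B C) (tcol K Z B C x y) = y"
  unfolding tcol_eq by (simp add: BAS2)

lemma t_rowi1: "a \<in> hom B Z \<Longrightarrow> b \<in> hom C Z \<Longrightarrow> tc K B (cbsum K B C) Z (trow K B C Z a b) (ci1 K B C) = a"
  unfolding trow_eq by (simp add: BAS2)
lemma t_rowi2: "a \<in> hom B Z \<Longrightarrow> b \<in> hom C Z \<Longrightarrow> tc K C (cbsum K B C) Z (trow K B C Z a b) (ci2 K B C) = b"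
  unfolding trow_eq by (simp add: BAS2)
lemma t_rowi1': "a \<in> hom B Z \<Longrightarrow> b \<in> hom C Z \<Longrightarrow> h \<in> hom W B \<Longrightarrow>
  tc K W (cbsum K B C) Z (trow K B C Z a b) (tc K W B (cbsum K B C) (ci1 K B C) h) = tc K W B Z a h"
  by (simp add: t_assoc[symmetric] TY t_rowi1)
lemma t_rowi2': "a \<in> hom B Z \<Longrightarrow> b \<in> hom C Z \<Longrightarrow> h \<in> hom W C \<Longrightarrow>
  tc K W (cbsum K B C) Z (trow K B C Z a b) (tc K W C (cbsum K B C) (ci2 K B C) h) = tc K W C Z b h"
  by (simp add: t_assoc[symmetric] TY t_rowi2)
lemma t_colcomp: "x \<in> hom Z B \<Longrightarrow> y \<in> hom Z C \<Longrightarrow> h \<in> hom W Z \<Longrightarrow>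
  tc K W Z (cbsum K B C) (tcol K Z B C x y) h = tcol K W B C (tc K W Z B x h) (tc K W Z C y h)"
  unfolding tcol_eq by (simp add: BAS2)
lemma t_comprow: "a \<in> hom B Z \<Longrightarrow> b \<in> hom C Z \<Longrightarrow> h \<in> hom Z W \<Longrightarrow>
  tc K (cbsum K B C) Z W h (trow K B C Z a b) = trow K B C W (tc K B Z W h a) (tc K C Z W h b)"
  unfolding trow_eq by (simp add: BAS2)
lemma t_rowcol: "a \<in> hom B Z \<Longrightarrow> b \<in> hom C Z \<Longrightarrow> x \<in> hom W B \<Longrightarrow> y \<in> hom W C \<Longrightarrow>
  tc K W (cbsum K B C) Z (trow K B C Z a b) (tcol K W B C x y) = ta K W Z (tc K W B Z a x) (tc K W C Z b y)"
  unfolding tcol_eq by (simp add: BAS2 t_rowi1' t_rowi2')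
lemma t_dagcol: "x \<in> hom Z B \<Longrightarrow> y \<in> hom Z C \<Longrightarrow>
  td K Z (cbsum K B C) (tcol K Z B C x y) = trow K B C Z (td K Z B x) (td K Z C y)"
  unfolding tcol_eq trow_eq by (simp add: BAS2)
lemma t_dagrow: "a \<in> hom B Z \<Longrightarrow> b \<in> hom C Z \<Longrightarrow>
  td K (cbsum K B C) Z (trow K B C Z a b) = tcol K Z B C (td K B Z a) (td K C Z b)"
  unfolding tcol_eq trow_eq by (simp add: BAS2)
lemma t_colext: "h \<in> hom Z (cbsum K B C) \<Longrightarrow> h = tcol K Z B C (tc K Z (cbsum K B C) B (cp1 K B C) h) (tc K Z (cbsum K B C) C (cp2 K B C) h)"
proof -
  assume h: "h \<in> hom Z (cbsum K B C)"
  have bs: "ta K (cbsum K B C) (cbsum K B C) (tc K (cbsum K B C) B (cbsum K B C) (ci1 K B C) (cp1 K B C))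
     (tc K (cbsum K B C) C (cbsum K B C) (ci2 K B C) (cp2 K B C)) = cid K (cbsum K B C)"
    unfolding tdefs by (rule bisum)
  show ?thesis using h by (simp add: tcol_eq t_assoc[symmetric] t_distr[symmetric] TY bs t_idl)
qed
lemma t_rowext: "h \<in> hom (cbsum K B C) Z \<Longrightarrow> h = trow K B C Z (tc K B (cbsum K B C) Z h (ci1 K B C)) (tc K C (cbsum K B C) Z h (ci2 K B C))"
proof -
  assume h: "h \<in> hom (cbsum K B C) Z"
  have bs: "ta K (cbsum K B C) (cbsum K B C) (tc K (cbsum K B C) B (cbsum K B C) (ci1 K B C) (cp1 K B C))
     (tc K (cbsum K B C) C (cbsum K B C) (ci2 K B C) (cp2 K B C)) = cid K (cbsum K B C)"
    unfolding tdefs by (rule bisum)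
  show ?thesis using h by (simp add: trow_eq t_assoc t_distl[symmetric] TY bs t_idr)
qed
lemma t_colinj: "x \<in> hom Z B \<Longrightarrow> y \<in> hom Z C \<Longrightarrow> x' \<in> hom Z B \<Longrightarrow> y' \<in> hom Z C \<Longrightarrow>
   tcol K Z B C x y = tcol K Z B C x' y' \<longleftrightarrow> x = x' \<and> y = y'"
  by (metis t_p1col t_p2col)
lemma t_rowinj: "a \<in> hom B Z \<Longrightarrow> b \<in> hom C Z \<Longrightarrow> a' \<in> hom B Z \<Longrightarrow> b' \<in> hom C Z \<Longrightarrow>
   trow K B C Z a b = trow K B C Z a' b' \<longleftrightarrow> a = a' \<and> b = b'"
  by (metis t_rowi1 t_rowi2)
lemma t_coladd: "x \<in> hom Z B \<Longrightarrow> y \<in> hom Z C \<Longrightarrow> x' \<in> hom Z B \<Longrightarrow> y' \<in> hom Z C \<Longrightarrow>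
   ta K Z (cbsum K B C) (tcol K Z B C x y) (tcol K Z B C x' y') = tcol K Z B C (ta K Z B x x') (ta K Z C y y')"
  apply (subst t_colext[of "ta K Z (cbsum K B C) (tcol K Z B C x y) (tcol K Z B C x' y')" Z B C])
  by (simp_all add: BAS2 t_p1col t_p2col)
lemma t_rowadd: "a \<in> hom B Z \<Longrightarrow> b \<in> hom C Z \<Longrightarrow> a' \<in> hom B Z \<Longrightarrow> b' \<in> hom C Z \<Longrightarrow>
   ta K (cbsum K B C) Z (trow K B C Z a b) (trow K B C Z a' b') = trow K B C Z (ta K B Z a a') (ta K C Z b b')"
  apply (subst t_rowext[of "ta K (cbsum K B C) Z (trow K B C Z a b) (trow K B C Z a' b')" B C Z])
  by (simp_all add: BAS2 t_rowi1 t_rowi2)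
lemma t_colzero: "tcol K Z B C (zz Z B) (zz Z C) = zz Z (cbsum K B C)"
  unfolding tcol_eq by (simp add: BAS2)
lemma t_rowzero: "trow K B C Z (zz B Z) (zz C Z) = zz (cbsum K B C) Z"
  unfolding trow_eq by (simp add: BAS2)
lemma t_colneg: "x \<in> hom Z B \<Longrightarrow> y \<in> hom Z C \<Longrightarrow>
   tn K Z (cbsum K B C) (tcol K Z B C x y) = tcol K Z B C (tn K Z B x) (tn K Z C y)"
  unfolding tcol_eq by (simp add: BAS2)

lemmas MAT = BAS2 t_rowi1 t_rowi2 t_rowi1' t_rowi2' t_p1col t_p2col t_colcomp t_comprow t_rowcol
  t_dagcol t_dagrow t_colinj t_rowinj t_coladd t_rowadd t_colzero t_rowzero t_colneg

lemma t_cancel1: "x \<in> hom A C \<Longrightarrow> g \<in> hom A C \<Longrightarrow> ta K A C x (ta K A C g (tn K A C x)) = g"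
  unfolding tdefs by (metis add_assoc add_comm add_negr add_zr neg_ty)
lemma t_cancel2: "x \<in> hom A C \<Longrightarrow> g \<in> hom A C \<Longrightarrow> ta K A C (ta K A C g (tn K A C x)) x = g"
  unfolding tdefs by (metis add_assoc add_negl add_zr neg_ty)

lemma main:
  fixes X A B C :: 'o
    and f g \<alpha> \<beta> \<delta> s t m :: 'm
  assumes "f \<in> chom K A B" and "g \<in> chom K A C"
    and "\<alpha> \<in> chom K B B" and "\<beta> \<in> chom K C B" and "\<delta> \<in> chom K C C"
    and "s \<in> chom K X B" and "t \<in> chom K X C" and "m \<in> chom K B C"
    and ma: "tc K B B C m \<alpha> = td K C B \<beta>" and sa: "td K B B \<alpha> = \<alpha>"
  shows "
  (let FT = (tcol K A B C f g, tcol K (cbsum K B C) B C (trow K B C B \<alpha> \<beta>) (trow K B C C (td K C B \<beta>) \<delta>), tcol K X B C s t);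
      GT = (trow K B A C m (ta K A C g (tn K A C (tc K A B C m f))), ta K C C \<delta> (tn K C C (tc K C B C m \<beta>)), ta K X C t (tn K X C (tc K X B C m s)));
      Z = czobj K;
      cpA = (tcol K A A A (cid K A) (cid K A), zz (cbsum K A A) (cbsum K A A), zz X (cbsum K A A));
      cpB = (tcol K B B B (cid K B) (cid K B), zz (cbsum K B B) (cbsum K B B), zz X (cbsum K B B));
      asT = tcol K (cbsum K (cbsum K B B) A) B (cbsum K B A)
              (tc K (cbsum K (cbsum K B B) A) (cbsum K B B) B (cp1 K B B) (cp1 K (cbsum K B B) A))
              (tcol K (cbsum K (cbsum K B B) A) B A
                 (tc K (cbsum K (cbsum K B B) A) (cbsum K B B) B (cp2 K B B) (cp1 K (cbsum K B B) A))
                 (cp2 K (cbsum K B B) A));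
      T1 = tgcomp K X A (cbsum K A A) (cbsum K (cbsum K B C) A) (tgtensor K X A (cbsum K B C) A A FT (gid K X A)) cpA;
      T2 = tgcomp K X A (cbsum K (cbsum K B C) A) (cbsum K (cbsum K B Z) A)
             (tgtensor K X (cbsum K B C) (cbsum K B Z) A A (tgtensor K X B B C Z (gid K X B) (gdel K X C)) (gid K X A)) T1;
      T3 = tgcomp K X A (cbsum K (cbsum K B Z) A) (cbsum K B A) (tgtensor K X (cbsum K B Z) B A A (glift K X B (cp1 K B Z)) (gid K X A)) T2;
      T4 = tgcomp K X A (cbsum K B A) (cbsum K (cbsum K B B) A) (tgtensor K X B (cbsum K B B) A A cpB (gid K X A)) T3;
      T5 = tgcomp K X A (cbsum K (cbsum K B B) A) (cbsum K B (cbsum K B A)) (glift K X (cbsum K B (cbsum K B A)) asT) T4;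
      T6 = tgcomp K X A (cbsum K B (cbsum K B A)) (cbsum K B C) (tgtensor K X B B (cbsum K B A) C (gid K X B) GT) T5
   in T6 = FT)"
  using assms
proof -
  have am: "tc K C B B \<alpha> (td K B C m) = \<beta>"
  proof -
    have "td K B C (tc K B B C m \<alpha>) = tc K C B B (td K B B \<alpha>) (td K B C m)"
      using assms(3,8) by (rule t_dagcomp)
    then show ?thesis using ma sa t_dagdag[OF assms(4)] by simp
  qed
  have mam: "tc K C B C m (tc K C B B \<alpha> (td K B C m)) = tc K C B C m \<beta>" using am by simp
  show ?thesis using assms am mam
    by (simp add: Let_def tgcomp_def tgtensor_def tmsum_def gid_def gdel_def glift_def MAT t_cancel1 t_cancel2)
qed
end

theorem mainTheorem7:
  fixes K :: "('o, 'm) dac"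
    and X A B C :: 'o
    and f g \<alpha> \<beta> \<delta> s t m :: 'm
  assumes "dagger_additive_category K"
    and "f \<in> chom K A B" and "g \<in> chom K A C"
    and "\<alpha> \<in> chom K B B" and "\<beta> \<in> chom K C B" and "\<delta> \<in> chom K C C"
    and "s \<in> chom K X B" and "t \<in> chom K X C"
    and "gauss_map K X A (cbsum K B C)
           (col K B C f g, mat2 K B C B C \<alpha> \<beta> (cdag K \<beta>) \<delta>, col K B C s t)"
    and "conditional_generator K B C \<alpha> \<beta> \<delta> m"
  shows "is_conditional K X A B C
           (col K B C f g, mat2 K B C B C \<alpha> \<beta> (cdag K \<beta>) \<delta>, col K B C s t)
           (row K B A m (csub K g (ccomp K m f)), csub K \<delta> (ccomp K m \<beta>), csub K t (ccomp K m s))"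
proof -
  interpret DAC K by (rule DAC.intro) (rule assms(1))
  note H = assms(2-8)
  have m: "m \<in> chom K B C" and ma0: "ccomp K m \<alpha> = cdag K \<beta>"
    and pos: "dag_positive K C (csub K \<delta> (ccomp K m \<beta>))"
    using assms(10) unfolding conditional_generator_def by auto
  have ma: "tc K B B C m \<alpha> = td K C B \<beta>" using ma0 unfolding tdefs .
  let ?S = "tcol K (cbsum K B C) B C (trow K B C B \<alpha> \<beta>) (trow K B C C (td K C B \<beta>) \<delta>)"
  have Seq: "mat2 K B C B C \<alpha> \<beta> (cdag K \<beta>) \<delta> = ?S" unfolding mat2_def tdefs ..
  have "dag_positive K (cbsum K B C) ?S" using assms(9) Seq unfolding gauss_map_def by auto
  then obtain D \<phi> where phi: "\<phi> \<in> chom K (cbsum K B C) D" and Sphi: "?S = ccomp K (cdag K \<phi>) \<phi>"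
    unfolding dag_positive_def by blast
  have "td K (cbsum K B C) (cbsum K B C) ?S = ?S"
  proof -
    have "cdag K (ccomp K (cdag K \<phi>) \<phi>) = ccomp K (cdag K \<phi>) \<phi>"
      using dagcomp[OF phi dag_ty[OF phi]] dagdag[OF phi] by simp
    then have "cdag K ?S = ?S" using Sphi by simp
    then show ?thesis by (simp only: td_def)
  qed
  hence "tc K B (cbsum K B C) B (cp1 K B C) (tc K B (cbsum K B C) (cbsum K B C) (td K (cbsum K B C) (cbsum K B C) ?S) (ci1 K B C))
     = tc K B (cbsum K B C) B (cp1 K B C) (tc K B (cbsum K B C) (cbsum K B C) ?S (ci1 K B C))" by simp
  hence sa: "td K B B \<alpha> = \<alpha>" using H by (simp add: MAT)
  have key: "let FT = (tcol K A B C f g, ?S, tcol K X B C s t);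
      GT = (trow K B A C m (ta K A C g (tn K A C (tc K A B C m f))), ta K C C \<delta> (tn K C C (tc K C B C m \<beta>)), ta K X C t (tn K X C (tc K X B C m s)));
      Z = czobj K;
      cpA = (tcol K A A A (cid K A) (cid K A), zz (cbsum K A A) (cbsum K A A), zz X (cbsum K A A));
      cpB = (tcol K B B B (cid K B) (cid K B), zz (cbsum K B B) (cbsum K B B), zz X (cbsum K B B));
      asT = tcol K (cbsum K (cbsum K B B) A) B (cbsum K B A)
              (tc K (cbsum K (cbsum K B B) A) (cbsum K B B) B (cp1 K B B) (cp1 K (cbsum K B B) A))
              (tcol K (cbsum K (cbsum K B B) A) B A
                 (tc K (cbsum K (cbsum K B B) A) (cbsum K B B) B (cp2 K B B) (cp1 K (cbsum K B B) A))
                 (cp2 K (cbsum K B B) A));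
      T1 = tgcomp K X A (cbsum K A A) (cbsum K (cbsum K B C) A) (tgtensor K X A (cbsum K B C) A A FT (gid K X A)) cpA;
      T2 = tgcomp K X A (cbsum K (cbsum K B C) A) (cbsum K (cbsum K B Z) A)
             (tgtensor K X (cbsum K B C) (cbsum K B Z) A A (tgtensor K X B B C Z (gid K X B) (gdel K X C)) (gid K X A)) T1;
      T3 = tgcomp K X A (cbsum K (cbsum K B Z) A) (cbsum K B A) (tgtensor K X (cbsum K B Z) B A A (glift K X B (cp1 K B Z)) (gid K X A)) T2;
      T4 = tgcomp K X A (cbsum K B A) (cbsum K (cbsum K B B) A) (tgtensor K X B (cbsum K B B) A A cpB (gid K X A)) T3;
      T5 = tgcomp K X A (cbsum K (cbsum K B B) A) (cbsum K B (cbsum K B A)) (glift K X (cbsum K B (cbsum K B A)) asT) T4;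
      T6 = tgcomp K X A (cbsum K B (cbsum K B A)) (cbsum K B C) (tgtensor K X B B (cbsum K B A) C (gid K X B) GT) T5
   in T6 = FT"
    by (rule main[OF H m ma sa])
  have gm: "gauss_map K X (cbsum K B A) C (row K B A m (csub K g (ccomp K m f)), csub K \<delta> (ccomp K m \<beta>), csub K t (ccomp K m s))"
    unfolding gauss_map_def using H m pos
    by (auto simp: row_def csub_def intro!: tys)
  show ?thesis
    unfolding is_conditional_def
    using gm key
    by (simp add: Let_def tgcomp_def gcomp_def tgtensor_def gtensor_def tmsum_def msum_def mat2_def tdefs
        gcopy_def runitor_def assoc_def csub_def)
qed

end
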